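(* Let $K\subset[0,1]$ be the triadic Cantor set. Then there exist functions $f,g\in C(K,\mathbb{R})$ such that \[ \overline{\dim}_B \operatorname{graph}(f+g)> \max\{\overline{\dim}_B \operatorname{graph}(f),\overline{\dim}_B \operatorname{graph}(g)\}. \]
   Context: $\operatorname{graph}(h)=\{(x,h(x)):x\in K\}\subset\mathbb{R}^2$ with the Euclidean metric. For a non-empty bounded set $X$ in a metric space, $N_n(X)$ is the maximal cardinality of a subset whose points are pairwise at distance $>2^{-n}$, and $\overline{\dim}_B X=\limsup_n \frac{\log N_n(X)}{n\log 2}$ (upper box dimension). *)

theory Defs
  imports "HOL-Analysis.Analysis" "HOL-Library.Liminf_Limsup"
begin

definition cantor_set :: "real set" where
  "cantor_set = {x. \<exists>d :: nat \<Rightarrow> nat. (\<forall>i. d i \<in> {0, 2}) \<and>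
                      x = (\<Sum>i. real (d i) / 3 ^ (Suc i))}"

definition graph_on :: "real set \<Rightarrow> (real \<Rightarrow> real) \<Rightarrow> (real \<times> real) set" where
  "graph_on K h = {(x, h x) | x. x \<in> K}"

definition sep_number :: "nat \<Rightarrow> 'a::metric_space set \<Rightarrow> nat" where
  "sep_number n X = Sup {card S | S. finite S \<and> S \<subseteq> X \<and>
      (\<forall>x\<in>S. \<forall>y\<in>S. x \<noteq> y \<longrightarrow> dist x y > (1/2) ^ n)}"

definition upper_box_dim :: "'a::metric_space set \<Rightarrow> ereal" where
  "upper_box_dim X = limsup (\<lambda>n. ereal (ln (real (sep_number n X)) / (real n * ln 2)))"

end

theory Submission
  imports Defs
begin


definition cs :: "(nat \<Rightarrow> nat) \<Rightarrow> real" where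
  "cs d = (\<Sum>i. real (d i) / 3 ^ Suc i)"

definition valid :: "(nat \<Rightarrow> nat) \<Rightarrow> bool" where
  "valid d \<longleftrightarrow> (\<forall>i. d i \<in> {0, 2})"

lemma geo_tail: "(\<lambda>i. 2 / 3 ^ Suc (i + k) :: real) sums (1 / 3 ^ k)"
proof -
  have "(\<lambda>i. (2 / 3 ^ Suc k) * (1/3::real) ^ i) sums ((2 / 3 ^ Suc k) * (1 / (1 - 1/3)))"
    by (intro sums_mult geometric_sums) auto
  moreover have "(2 / 3 ^ Suc k) * (1 / (1 - 1/3)) = (1 / 3 ^ k :: real)" by simp
  moreover have "\<And>i. (2 / 3 ^ Suc k) * (1/3::real) ^ i = 2 / 3 ^ Suc (i + k)"
    by (simp add: power_add power_one_over field_simps)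
  ultimately show ?thesis by simp
qed

lemma D_bound:
  assumes "valid d" "valid e"
  shows "norm ((real (d i) - real (e i)) / 3 ^ Suc i) \<le> 2 / 3 ^ Suc i"
proof -
  have "d i \<in> {0,2}" "e i \<in> {0,2}" using assms by (auto simp: valid_def)
  thus ?thesis by (auto simp: divide_simps)
qed

lemma summable_D:
  assumes "valid d" "valid e"
  shows "summable (\<lambda>i. (real (d i) - real (e i)) / 3 ^ Suc i)"
proof (rule summable_comparison_test')
  show "summable (\<lambda>i. 2 / 3 ^ Suc (i + 0) :: real)" using geo_tail[of 0] by (auto simp: sums_iff)
  show "norm ((real (d i) - real (e i)) / 3 ^ Suc i) \<le> 2 / 3 ^ Suc (i + 0)" for i
    using D_bound[OF assms] by simp
qed

lemma summable_cs: "valid d \<Longrightarrow> summable (\<lambda>i. real (d i) / 3 ^ Suc i)"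
proof -
  assume v: "valid d"
  have v0: "valid (\<lambda>_. 0)" by (simp add: valid_def)
  show ?thesis using summable_D[OF v v0] by simp
qed

lemma cs_diff:
  assumes "valid d" "valid e"
  shows "cs d - cs e = (\<Sum>i. (real (d i) - real (e i)) / 3 ^ Suc i)"
  unfolding cs_def
  using suminf_diff[OF summable_cs[OF assms(1)] summable_cs[OF assms(2)]]
  by (simp add: diff_divide_distrib)

lemma tail_bound:
  assumes "valid d" "valid e"
  shows "\<bar>\<Sum>i. (real (d (i + k)) - real (e (i + k))) / 3 ^ Suc (i + k)\<bar> \<le> 1 / 3 ^ k"
proof -
  have "norm (\<Sum>i. (real (d (i + k)) - real (e (i + k))) / 3 ^ Suc (i + k)) \<le> (\<Sum>i. 2 / 3 ^ Suc (i + k))"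
    by (rule norm_suminf_le) (use D_bound[OF assms] geo_tail in \<open>auto simp: sums_iff\<close>)
  also have "\<dots> = 1 / 3 ^ k" using geo_tail sums_unique by metis
  finally show ?thesis by simp
qed

lemma cs_split:
  assumes "valid d" "valid e"
  shows "cs d - cs e = (\<Sum>i. (real (d (i + k)) - real (e (i + k))) / 3 ^ Suc (i + k))
      + (\<Sum>i<k. (real (d i) - real (e i)) / 3 ^ Suc i)"
  unfolding cs_diff[OF assms] by (rule suminf_split_initial_segment[OF summable_D[OF assms]])

lemma cs_close:
  assumes "valid d" "valid e" "\<And>i. i < k \<Longrightarrow> d i = e i"
  shows "\<bar>cs d - cs e\<bar> \<le> 1 / 3 ^ k"
  using cs_split[OF assms(1,2), of k] tail_bound[OF assms(1,2), of k] assms(3) by simp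

lemma cs_far1:
  assumes "valid d" "valid e" "d j \<noteq> e j" "\<And>i. i < j \<Longrightarrow> d i = e i"
  shows "1 / 3 ^ Suc j \<le> \<bar>cs d - cs e\<bar>"
proof -
  have s: "(\<Sum>i<Suc j. (real (d i) - real (e i)) / 3 ^ Suc i) = (real (d j) - real (e j)) / 3 ^ Suc j"
    using assms(4) by simp
  have a: "\<bar>(real (d j) - real (e j)) / 3 ^ Suc j\<bar> = 2 / 3 ^ Suc j"
  proof -
    have "d j \<in> {0,2}" "e j \<in> {0,2}" using assms by (auto simp: valid_def)
    thus ?thesis using assms(3) by (auto simp: divide_simps)
  qed
  show ?thesis using cs_split[OF assms(1,2), of "Suc j"] tail_bound[OF assms(1,2), of "Suc j"] s a
    by linarith
qed

lemma cs_far: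
  assumes "valid d" "valid e" "j < k" "d j \<noteq> e j"
  shows "1 / 3 ^ k \<le> \<bar>cs d - cs e\<bar>"
proof -
  from assms(4) have "\<exists>j. d j \<noteq> e j" by blast
  then obtain j0 where j0: "d j0 \<noteq> e j0" "\<And>i. i < j0 \<Longrightarrow> d i = e i"
    using exists_least_iff[of "\<lambda>j. d j \<noteq> e j"] by blast
  have "j0 \<le> j" using j0(2) assms(4) by (meson not_le)
  hence "Suc j0 \<le> k" using assms(3) by simp
  hence "(3::real) ^ Suc j0 \<le> 3 ^ k" by (intro power_increasing) auto
  hence "1 / 3 ^ k \<le> (1 / 3 ^ Suc j0 :: real)" by (simp add: divide_simps)
  also have "\<dots> \<le> \<bar>cs d - cs e\<bar>" by (rule cs_far1[OF assms(1,2) j0])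
  finally show ?thesis .
qed

lemma cs_inj: "valid d \<Longrightarrow> valid e \<Longrightarrow> cs d = cs e \<Longrightarrow> d = e"
proof (rule ccontr)
  assume a: "valid d" "valid e" "cs d = cs e" "d \<noteq> e"
  then obtain j where "d j \<noteq> e j" by auto
  from cs_far[OF a(1,2) lessI this] a(3) show False by (simp add: divide_simps)
qed



definition dig :: "real \<Rightarrow> nat \<Rightarrow> nat" where
  "dig x = (SOME d. valid d \<and> x = cs d)"

lemma dig: "x \<in> cantor_set \<Longrightarrow> valid (dig x) \<and> x = cs (dig x)"
proof -
  assume "x \<in> cantor_set"
  hence "\<exists>d. valid d \<and> x = cs d" by (auto simp: cantor_set_def valid_def cs_def)
  thus ?thesis unfolding dig_def by (rule someI_ex)
qed

lemma cs_in: "valid d \<Longrightarrow> cs d \<in> cantor_set"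
  by (auto simp: cantor_set_def valid_def cs_def)

lemma dig_cs: "valid d \<Longrightarrow> dig (cs d) = d"
  using dig[OF cs_in, of d] cs_inj by metis

definition sq :: "nat set \<Rightarrow> real \<Rightarrow> nat \<Rightarrow> nat" where
  "sq A x = (\<lambda>m. if m \<in> A then dig x (4*m) else 0)"

definition FF :: "nat set \<Rightarrow> real \<Rightarrow> real" where
  "FF A x = cs (sq A x)"

lemma valid_sq: "x \<in> cantor_set \<Longrightarrow> valid (sq A x)"
  using dig[of x] by (auto simp: valid_def sq_def)

lemma dig_agree:
  assumes "x \<in> cantor_set" "y \<in> cantor_set" "\<bar>x - y\<bar> < 1 / 3 ^ k" "i < k"
  shows "dig x i = dig y i"
proof (rule ccontr)
  assume "dig x i \<noteq> dig y i"
  from cs_far[OF conjunct1[OF dig[OF assms(1)]] conjunct1[OF dig[OF assms(2)]] assms(4) this]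
  show False using dig[OF assms(1)] dig[OF assms(2)] assms(3) by simp
qed

lemma FF_close:
  assumes "x \<in> cantor_set" "y \<in> cantor_set" "\<bar>x - y\<bar> < 1 / 3 ^ (4 * N)"
  shows "\<bar>FF A x - FF A y\<bar> \<le> 1 / 3 ^ N"
  unfolding FF_def
proof (rule cs_close[OF valid_sq[OF assms(1)] valid_sq[OF assms(2)]])
  fix i assume "i < N"
  thus "sq A x i = sq A y i" using dig_agree[OF assms, of "4*i"] by (simp add: sq_def)
qed

lemma FF_cont: "continuous_on cantor_set (FF A)"
  unfolding continuous_on_iff
proof (intro ballI allI impI)
  fix x e assume x: "x \<in> cantor_set" and e: "(0::real) < e"
  obtain N where N: "(1/3::real) ^ N < e" using real_arch_pow_inv[OF e, of "1/3"] by auto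
  show "\<exists>d>0. \<forall>x'\<in>cantor_set. dist x' x < d \<longrightarrow> dist (FF A x') (FF A x) < e"
  proof (intro exI[of _ "1 / 3 ^ (4 * N)"] conjI ballI impI)
    show "(0::real) < 1 / 3 ^ (4 * N)" by simp
    fix y assume y: "y \<in> cantor_set" "dist y x < 1 / 3 ^ (4 * N)"
    have "\<bar>FF A y - FF A x\<bar> \<le> 1 / 3 ^ N" using FF_close[OF y(1) x] y(2) by (simp add: dist_real_def)
    thus "dist (FF A y) (FF A x) < e" using N by (simp add: dist_real_def power_one_over)
  qed
qed

lemma FF_sum:
  assumes "x \<in> cantor_set"
  shows "FF {m. even m} x + FF {m. odd m} x = FF UNIV x"
proof -
  have "FF {m. even m} x + FF {m. odd m} x =
     (\<Sum>i. real (sq {m. even m} x i) / 3 ^ Suc i + real (sq {m. odd m} x i) / 3 ^ Suc i)"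
    unfolding FF_def cs_def
    by (rule suminf_add[OF summable_cs summable_cs]) (auto intro: valid_sq assms)
  also have "\<dots> = FF UNIV x"
    unfolding FF_def cs_def
    by (rule suminf_cong) (auto simp: sq_def)
  finally show ?thesis .
qed



lemma dist_le_sum: "dist (a, b) (c, d) \<le> \<bar>a - c\<bar> + \<bar>b - (d::real)\<bar>" for a c :: real
  unfolding dist_Pair_Pair dist_real_def using sqrt_sum_squares_le_sum_abs by simp

lemma graph_mem: "p \<in> graph_on K h \<longleftrightarrow> fst p \<in> K \<and> snd p = h (fst p)"
  by (cases p) (auto simp: graph_on_def)

lemma sep_upper:
  assumes k: "2 / 3 ^ k \<le> (1/2::real) ^ n"
    and S: "finite S" "S \<subseteq> graph_on cantor_set (FF A)"
      "\<forall>x\<in>S. \<forall>y\<in>S. x \<noteq> y \<longrightarrow> dist x y > (1/2::real) ^ n"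
  shows "card S \<le> 2 ^ (k + card ({..<k} \<inter> A))"
proof -
  define I where "I = {..<k} \<union> (\<lambda>m. 4*m) ` ({..<k} \<inter> A)"
  define cell where "cell p = {i\<in>I. dig (fst p) i = 2}" for p :: "real \<times> real"
  have inj: "inj_on cell S"
  proof (rule inj_onI)
    fix p q assume p: "p \<in> S" and q: "q \<in> S" and c: "cell p = cell q"
    define x where "x = fst p"
    define y where "y = fst q"
    have xK: "x \<in> cantor_set" and px: "p = (x, FF A x)"
      using p S(2) unfolding x_def graph_mem by (auto simp: graph_mem prod_eq_iff)
    have yK: "y \<in> cantor_set" and qy: "q = (y, FF A y)"
      using q S(2) unfolding y_def graph_mem by (auto simp: graph_mem prod_eq_iff)
    have agree: "dig x i = dig y i" if "i \<in> I" for i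
    proof -
      have "dig x i \<in> {0,2}" "dig y i \<in> {0,2}" using dig[OF xK] dig[OF yK] by (auto simp: valid_def)
      moreover have "dig x i = 2 \<longleftrightarrow> dig y i = 2"
        using c that unfolding cell_def x_def y_def by blast
      ultimately show ?thesis by auto
    qed
    have d1: "\<bar>x - y\<bar> \<le> 1 / 3 ^ k"
      using cs_close[OF conjunct1[OF dig[OF xK]] conjunct1[OF dig[OF yK]], of k] agree
        dig[OF xK] dig[OF yK] unfolding I_def by auto
    have d2: "\<bar>FF A x - FF A y\<bar> \<le> 1 / 3 ^ k"
      unfolding FF_def
    proof (rule cs_close[OF valid_sq[OF xK] valid_sq[OF yK]])
      fix i assume "i < k"
      thus "sq A x i = sq A y i" using agree[of "4*i"] unfolding sq_def I_def by auto
    qed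
    have "dist p q \<le> 2 / 3 ^ k" using dist_le_sum[of x "FF A x" y "FF A y"] d1 d2 px qy by simp
    hence "\<not> dist p q > (1/2) ^ n" using k by linarith
    thus "p = q" using S(3) p q by blast
  qed
  have "card S = card (cell ` S)" using card_image[OF inj] by simp
  also have "\<dots> \<le> card (Pow I)"
    by (rule card_mono) (auto simp: I_def cell_def)
  also have "\<dots> = 2 ^ card I" by (rule card_Pow) (simp add: I_def)
  also have "\<dots> \<le> 2 ^ (k + card ({..<k} \<inter> A))"
  proof (rule power_increasing)
    have "card I \<le> card {..<k} + card ((\<lambda>m. 4*m) ` ({..<k} \<inter> A))"
      unfolding I_def by (rule card_Un_le)
    also have "\<dots> \<le> k + card ({..<k} \<inter> A)" using card_image_le[of "{..<k} \<inter> A" "\<lambda>m. 4*m"] by simp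
    finally show "card I \<le> k + card ({..<k} \<inter> A)" .
  qed auto
  finally show ?thesis .
qed

definition dT :: "nat set \<Rightarrow> nat \<Rightarrow> nat" where
  "dT T = (\<lambda>i. if i \<in> T then 2 else 0)"

lemma valid_dT: "valid (dT T)" by (simp add: valid_def dT_def)

lemma sep_lower:
  assumes k: "(1/2::real) ^ n < 1 / 3 ^ k"
  shows "\<exists>S. finite S \<and> S \<subseteq> graph_on cantor_set (FF UNIV) \<and>
      (\<forall>x\<in>S. \<forall>y\<in>S. x \<noteq> y \<longrightarrow> dist x y > (1/2::real) ^ n) \<and>
      card S = 2 ^ (k + (k - (k div 4 + 1)))"
proof -
  define M where "M = {k div 4 + 1..<k}"
  define J where "J = {..<k} \<union> (\<lambda>m. 4*m) ` M"
  define P where "P T = (cs (dT T), FF UNIV (cs (dT T)))" for T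
  have sqT: "sq UNIV (cs (dT T)) = (\<lambda>m. dT T (4*m))" for T
    unfolding sq_def dig_cs[OF valid_dT] by simp
  have sep: "dist (P T) (P T') > (1/2) ^ n" if T: "T \<subseteq> J" "T' \<subseteq> J" "T \<noteq> T'" for T T'
  proof -
    obtain i where i: "(i \<in> T) \<noteq> (i \<in> T')" using T(3) by blast
    hence iJ: "i \<in> J" using T by blast
    have dif: "dT T i \<noteq> dT T' i" using i by (auto simp: dT_def)
    have "1 / 3 ^ k \<le> dist (P T) (P T')"
    proof (cases "i < k")
      case True
      have "1 / 3 ^ k \<le> \<bar>cs (dT T) - cs (dT T')\<bar>" by (rule cs_far[OF valid_dT valid_dT True dif])
      also have "\<dots> \<le> dist (P T) (P T')"
        using dist_fst_le[of "P T" "P T'"] by (simp add: P_def dist_real_def)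
      finally show ?thesis .
    next
      case False
      then obtain m where m: "m \<in> M" "i = 4*m" using iJ unfolding J_def by auto
      have mk: "m < k" using m(1) by (simp add: M_def)
      have "1 / 3 ^ k \<le> \<bar>FF UNIV (cs (dT T)) - FF UNIV (cs (dT T'))\<bar>"
        unfolding FF_def sqT
        by (rule cs_far[OF _ _ mk]) (use dif m in \<open>auto simp: valid_def dT_def\<close>)
      also have "\<dots> \<le> dist (P T) (P T')"
        using dist_snd_le[of "P T" "P T'"] by (simp add: P_def dist_real_def)
      finally show ?thesis .
    qed
    thus ?thesis using k by linarith
  qed
  have inj: "inj_on P (Pow J)"
  proof (rule inj_onI, rule ccontr)
    fix T T' assume "T \<in> Pow J" "T' \<in> Pow J" "P T = P T'" "T \<noteq> T'"
    with sep[of T T'] show False by simp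
  qed
  have finJ: "finite J" by (simp add: J_def M_def)
  have disj: "{..<k} \<inter> (\<lambda>m. 4*m) ` M = {}"
  proof -
    have "4 * m \<ge> k" if "m \<in> M" for m
    proof -
      have "k div 4 + 1 \<le> m" using that by (simp add: M_def)
      moreover have "k < 4 * (k div 4 + 1)" by presburger
      ultimately show ?thesis by linarith
    qed
    thus ?thesis by (auto simp: not_le[symmetric])
  qed
  have cJ: "card J = k + (k - (k div 4 + 1))"
  proof -
    have "card J = card {..<k} + card ((\<lambda>m. 4*m) ` M)"
      unfolding J_def by (rule card_Un_disjoint) (use disj in \<open>auto simp: M_def\<close>)
    also have "card ((\<lambda>m. 4*m) ` M) = card M" by (rule card_image) (auto simp: inj_on_def)
    finally show ?thesis by (simp add: M_def)
  qed
  show ?thesis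
  proof (intro exI[of _ "P ` Pow J"] conjI)
    show "finite (P ` Pow J)" using finJ by simp
    show "P ` Pow J \<subseteq> graph_on cantor_set (FF UNIV)"
      using cs_in[OF valid_dT] by (auto simp: P_def graph_on_def)
    show "\<forall>x\<in>P ` Pow J. \<forall>y\<in>P ` Pow J. x \<noteq> y \<longrightarrow> (1/2) ^ n < dist x y"
      using sep by blast
    show "card (P ` Pow J) = 2 ^ (k + (k - (k div 4 + 1)))"
      using card_image[OF inj] card_Pow[of J] cJ finJ by simp
  qed
qed



lemma sepn_le:
  assumes "2 / 3 ^ k \<le> (1/2::real) ^ n"
  shows "sep_number n (graph_on cantor_set (FF A)) \<le> 2 ^ (k + card ({..<k} \<inter> A))"
  unfolding sep_number_def
proof (rule cSup_least)
  show "{card S |S. finite S \<and> S \<subseteq> graph_on cantor_set (FF A) \<and>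
      (\<forall>x\<in>S. \<forall>y\<in>S. x \<noteq> y \<longrightarrow> (1 / 2) ^ n < dist x y)} \<noteq> {}"
  proof -
    have "card {} \<in> {card S |S. finite S \<and> S \<subseteq> graph_on cantor_set (FF A) \<and>
      (\<forall>x\<in>S. \<forall>y\<in>S. x \<noteq> y \<longrightarrow> (1 / 2) ^ n < dist x y)}"
      by (rule CollectI, rule exI[of _ "{}"]) simp
    thus ?thesis by blast
  qed
  fix c assume "c \<in> {card S |S. finite S \<and> S \<subseteq> graph_on cantor_set (FF A) \<and>
      (\<forall>x\<in>S. \<forall>y\<in>S. x \<noteq> y \<longrightarrow> (1 / 2) ^ n < dist x y)}"
  then obtain S where "c = card S" "finite S" "S \<subseteq> graph_on cantor_set (FF A)"
      "\<forall>x\<in>S. \<forall>y\<in>S. x \<noteq> y \<longrightarrow> (1 / 2) ^ n < dist x y" by blast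
  thus "c \<le> 2 ^ (k + card ({..<k} \<inter> A))" using sep_upper[OF assms] by simp
qed

lemma exists_k: "\<exists>k. 2 / 3 ^ k \<le> (1/2::real) ^ n"
proof -
  have "0 < (1/2::real) ^ n / 2" by simp
  from real_arch_pow_inv[OF this, of "1/3"] obtain k where "(1/3::real) ^ k < (1/2) ^ n / 2" by auto
  hence "1 / 3 ^ k < (1/2::real) ^ n / 2" by (simp only: power_one_over)
  hence "2 * (1 / 3 ^ k) \<le> (1/2::real) ^ n" by linarith
  thus ?thesis by auto
qed

lemma sepn_ge:
  assumes "(1/2::real) ^ n < 1 / 3 ^ k"
  shows "2 ^ (k + (k - (k div 4 + 1))) \<le> sep_number n (graph_on cantor_set (FF UNIV))"
  unfolding sep_number_def
proof (rule cSup_upper)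
  obtain S where S: "finite S" "S \<subseteq> graph_on cantor_set (FF UNIV)"
      "\<forall>x\<in>S. \<forall>y\<in>S. x \<noteq> y \<longrightarrow> dist x y > (1/2::real) ^ n"
      "card S = 2 ^ (k + (k - (k div 4 + 1)))" using sep_lower[OF assms] by blast
  show "2 ^ (k + (k - (k div 4 + 1))) \<in> {card S |S. finite S \<and> S \<subseteq> graph_on cantor_set (FF UNIV) \<and>
      (\<forall>x\<in>S. \<forall>y\<in>S. x \<noteq> y \<longrightarrow> (1 / 2) ^ n < dist x y)}"
    by (rule CollectI, rule exI[of _ S]) (use S in simp)
  obtain k0 where k0: "2 / 3 ^ k0 \<le> (1/2::real) ^ n" using exists_k by blast
  show "bdd_above {card S |S. finite S \<and> S \<subseteq> graph_on cantor_set (FF UNIV) \<and>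
      (\<forall>x\<in>S. \<forall>y\<in>S. x \<noteq> y \<longrightarrow> (1 / 2) ^ n < dist x y)}"
    by (rule bdd_aboveI[of _ "2 ^ (k0 + card ({..<k0} \<inter> UNIV))"]) (use sep_upper[OF k0] in blast)
qed

definition th :: real where "th = ln 2 / ln 3"

lemma th_ge: "1/2 \<le> th"
proof -
  have "ln 3 \<le> ln (4::real)" by simp
  also have "ln (4::real) = 2 * ln 2" using ln_realpow[of 2 2] by simp
  finally have "ln 3 \<le> 2 * ln (2::real)" .
  thus ?thesis unfolding th_def by (simp add: field_simps)
qed

lemma pow_cmp1: "real n * th \<le> real j \<Longrightarrow> (2::real) ^ n \<le> 3 ^ j"
proof -
  assume a: "real n * th \<le> real j"
  have "real n * ln 2 \<le> real j * ln 3"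
    using mult_right_mono[OF a, of "ln 3"] unfolding th_def by simp
  hence "ln ((2::real) ^ n) \<le> ln (3 ^ j)" by (simp add: ln_realpow)
  thus ?thesis by simp
qed

lemma pow_cmp2: "real j < real n * th \<Longrightarrow> (3::real) ^ j < 2 ^ n"
proof -
  assume a: "real j < real n * th"
  have "real j * ln 3 < real n * ln 2"
    using mult_strict_right_mono[OF a, of "ln 3"] unfolding th_def by simp
  hence "ln ((3::real) ^ j) < ln (2 ^ n)" by (simp add: ln_realpow)
  thus ?thesis by simp
qed

lemma card_par:
  assumes "\<And>m m'. m \<in> A \<Longrightarrow> m' \<in> A \<Longrightarrow> m div 2 = m' div 2 \<Longrightarrow> m = m'"
  shows "card ({..<k} \<inter> A) \<le> (k + 1) div 2"
proof -
  have "card ({..<k} \<inter> A) \<le> card {..<(k+1) div 2}"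
  proof (rule card_inj_on_le[of "\<lambda>m. m div 2"])
    show "inj_on (\<lambda>m. m div 2) ({..<k} \<inter> A)" using assms by (auto simp: inj_on_def)
    show "(\<lambda>m. m div 2) ` ({..<k} \<inter> A) \<subseteq> {..<(k + 1) div 2}" by auto
  qed auto
  thus ?thesis by simp
qed



lemma frac_aux: "0 < a \<Longrightarrow> 0 < b \<Longrightarrow> 2*b \<le> a \<Longrightarrow> 2/a \<le> 1/(b::real)"
  by (simp add: field_simps)

lemma frac_aux2: "0 < a \<Longrightarrow> 0 < b \<Longrightarrow> a < b \<Longrightarrow> 1/b < 1/(a::real)"
  by (simp add: field_simps)

lemma nth_big: "n \<ge> 200 \<Longrightarrow> real n * th \<ge> 100"
proof -
  assume "n \<ge> 200"
  hence "real n \<ge> 200" by simp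
  hence "real n * th \<ge> 200 * (1/2)" by (rule mult_mono) (use th_ge in auto)
  thus ?thesis by simp
qed

lemma ratio_upper:
  assumes n: "n \<ge> 200"
    and par: "\<And>m m'. m \<in> A \<Longrightarrow> m' \<in> A \<Longrightarrow> m div 2 = m' div 2 \<Longrightarrow> m = m'"
  shows "ln (real (sep_number n (graph_on cantor_set (FF A)))) / (real n * ln 2) \<le> 8/5 * th"
proof -
  have nth: "real n * th \<ge> 100" by (rule nth_big[OF n])
  define j where "j = nat \<lceil>real n * th\<rceil>"
  define k where "k = j + 1"
  have jr: "real j = real_of_int \<lceil>real n * th\<rceil>" unfolding j_def using nth by simp
  have kr2: "real k \<le> real n * th + 2" unfolding k_def using jr by linarith
  have "(2::real) ^ n \<le> 3 ^ j" by (rule pow_cmp1) (use jr in linarith)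
  moreover have "(3::real)^k = 3 * 3^j" unfolding k_def by simp
  moreover have "(0::real) \<le> 3 ^ j" by simp
  ultimately have X: "2 * 2 ^ n \<le> (3::real) ^ k" by linarith
  have "2 / 3 ^ k \<le> 1 / (2::real) ^ n" by (rule frac_aux[OF _ _ X]) simp_all
  hence "2 / 3 ^ k \<le> (1/2::real) ^ n" by (simp only: power_one_over)
  from sepn_le[OF this] have N: "sep_number n (graph_on cantor_set (FF A)) \<le> 2 ^ (k + card ({..<k} \<inter> A))" .
  define N where "N = sep_number n (graph_on cantor_set (FF A))"
  define c where "c = card ({..<k} \<inter> A)"
  have c: "real c \<le> (real k + 1) / 2"
  proof -
    have "real c \<le> real ((k + 1) div 2)" using card_par[OF par, where k=k] unfolding c_def by (simp only: of_nat_le_iff)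
    also have "\<dots> \<le> real (k+1) / 2" using of_nat_div_le_of_nat[of "k+1" 2] by (simp only: of_nat_numeral)
    also have "real (k+1) / 2 = (real k + 1) / 2" by (simp only: of_nat_add of_nat_1)
    finally show ?thesis .
  qed
  have "ln (real N) \<le> real (k + c) * ln 2"
  proof (cases "N = 0")
    case True thus ?thesis by simp
  next
    case False
    have "real N \<le> real ((2::nat) ^ (k + c))" using N unfolding N_def c_def by (simp only: of_nat_le_iff)
    hence "real N \<le> 2 ^ (k + c)" by simp
    hence "ln (real N) \<le> ln (2 ^ (k + c))" using False by simp
    thus ?thesis by (simp add: ln_realpow)
  qed
  also have "real (k + c) * ln 2 \<le> (8/5 * (real n * th)) * ln 2"
  proof (rule mult_right_mono)
    have "real (k + c) \<le> 3/2 * (real n * th) + 7/2" using kr2 c by simp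
    thus "real (k + c) \<le> 8/5 * (real n * th)" using nth by linarith
  qed simp
  also have "(8/5 * (real n * th)) * ln 2 = (8/5 * th) * (real n * ln 2)" by (simp only: mult_ac)
  finally have h: "ln (real N) \<le> (8/5 * th) * (real n * ln 2)" .
  have pos: "real n * ln 2 > 0" using n by simp
  have "ln (real N) / (real n * ln 2) \<le> ((8/5 * th) * (real n * ln 2)) / (real n * ln 2)"
    by (rule divide_right_mono[OF h]) (use pos in linarith)
  also have "\<dots> = 8/5 * th" by (rule nonzero_mult_div_cancel_right) (use pos in linarith)
  finally show ?thesis unfolding N_def .
qed

lemma ratio_lower:
  assumes n: "n \<ge> 200"
  shows "17/10 * th \<le> ln (real (sep_number n (graph_on cantor_set (FF UNIV)))) / (real n * ln 2)"
proof -
  have nth: "real n * th \<ge> 100" by (rule nth_big[OF n])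
  define k where "k = nat \<lceil>real n * th\<rceil> - 1"
  have c1: "\<lceil>real n * th\<rceil> \<ge> 1" using nth by linarith
  have ik: "int k = \<lceil>real n * th\<rceil> - 1" unfolding k_def using c1 by arith
  have kk: "real k = real_of_int \<lceil>real n * th\<rceil> - 1"
  proof -
    have "real_of_int (int k) = real_of_int (\<lceil>real n * th\<rceil> - 1)" using ik by simp
    thus ?thesis by simp
  qed
  have kr1: "real k < real n * th" using kk by linarith
  have kr2: "real n * th - 1 \<le> real k" using kk by linarith
  have "(3::real) ^ k < 2 ^ n" by (rule pow_cmp2[OF kr1])
  hence X: "(3::real) ^ k < 2 ^ n" .
  have "1 / (2::real) ^ n < 1 / 3 ^ k" by (rule frac_aux2[OF _ _ X]) simp_all
  hence "(1/2::real) ^ n < 1 / 3 ^ k" by (simp only: power_one_over)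
  from sepn_ge[OF this]
  have N: "2 ^ (k + (k - (k div 4 + 1))) \<le> sep_number n (graph_on cantor_set (FF UNIV))" .
  define N where "N = sep_number n (graph_on cantor_set (FF UNIV))"
  define b where "b = k + (k - (k div 4 + 1))"
  have b: "7/4 * real k - 1 \<le> real b"
  proof -
    have "real (k div 4) \<le> real k / 4" using of_nat_div_le_of_nat[of k 4] by simp
    moreover have "k div 4 + 1 \<le> k" using kr2 nth by linarith
    ultimately show ?thesis unfolding b_def by (simp add: of_nat_diff)
  qed
  have "real b * ln 2 \<le> ln (real N)"
  proof -
    have "real ((2::nat) ^ b) \<le> real N" using N unfolding N_def b_def by (simp only: of_nat_le_iff)
    hence h: "(2::real) ^ b \<le> real N" by (simp only: of_nat_power of_nat_numeral)
    have pos: "0 < (2::real)^b" by simp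
    have "ln ((2::real) ^ b) \<le> ln (real N)" by (subst ln_le_cancel_iff) (use h pos in linarith)+
    thus ?thesis by (simp add: ln_realpow)
  qed
  moreover have "(17/10 * (real n * th)) * ln 2 \<le> real b * ln 2"
  proof (rule mult_right_mono)
    have "7/4 * (real n * th) - 11/4 \<le> real b" using b kr2 by simp
    thus "17/10 * (real n * th) \<le> real b" using nth by linarith
  qed simp
  moreover have "(17/10 * (real n * th)) * ln 2 = (17/10 * th) * (real n * ln 2)" by (simp only: mult_ac)
  ultimately have h: "(17/10 * th) * (real n * ln 2) \<le> ln (real N)" by linarith
  have pos: "real n * ln 2 > 0" using n by simp
  have "((17/10 * th) * (real n * ln 2)) / (real n * ln 2) \<le> ln (real N) / (real n * ln 2)"
    by (rule divide_right_mono[OF h]) (use pos in linarith)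
  moreover have "((17/10 * th) * (real n * ln 2)) / (real n * ln 2) = 17/10 * th"
    by (rule nonzero_mult_div_cancel_right) (use pos in linarith)
  ultimately show ?thesis unfolding N_def by (simp only:)
qed



lemma par_even: "m \<in> {m. even m} \<Longrightarrow> m' \<in> {m. even m} \<Longrightarrow> m div 2 = m' div 2 \<Longrightarrow> m = m'"
  for m m' :: nat by (auto elim!: evenE)

lemma par_odd: "m \<in> {m. odd m} \<Longrightarrow> m' \<in> {m. odd m} \<Longrightarrow> m div 2 = m' div 2 \<Longrightarrow> m = m'"
  for m m' :: nat by (auto elim!: oddE)

lemma dim_upper:
  assumes par: "\<And>m m'. m \<in> A \<Longrightarrow> m' \<in> A \<Longrightarrow> m div 2 = m' div 2 \<Longrightarrow> m = m'"
  shows "upper_box_dim (graph_on cantor_set (FF A)) \<le> ereal (8/5 * th)"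
  unfolding upper_box_dim_def
proof (rule Limsup_bounded)
  show "\<forall>\<^sub>F n in sequentially. ereal (ln (real (sep_number n (graph_on cantor_set (FF A)))) / (real n * ln 2)) \<le> ereal (8/5 * th)"
    unfolding eventually_sequentially
  proof (intro exI[of _ 200] allI impI)
    fix n :: nat assume "200 \<le> n"
    from ratio_upper[OF this par] show "ereal (ln (real (sep_number n (graph_on cantor_set (FF A)))) / (real n * ln 2)) \<le> ereal (8/5 * th)"
      by (simp only: ereal_less_eq)
  qed
qed

lemma dim_lower:
  "ereal (17/10 * th) \<le> upper_box_dim (graph_on cantor_set (FF UNIV))"
  unfolding upper_box_dim_def
proof -
  have "ereal (17/10 * th) \<le> liminf (\<lambda>n. ereal (ln (real (sep_number n (graph_on cantor_set (FF UNIV)))) / (real n * ln 2)))"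
  proof (rule Liminf_bounded)
    show "\<forall>\<^sub>F n in sequentially. ereal (17/10 * th) \<le> ereal (ln (real (sep_number n (graph_on cantor_set (FF UNIV)))) / (real n * ln 2))"
      unfolding eventually_sequentially
    proof (intro exI[of _ 200] allI impI)
      fix n :: nat assume "200 \<le> n"
      from ratio_lower[OF this] show "ereal (17/10 * th) \<le> ereal (ln (real (sep_number n (graph_on cantor_set (FF UNIV)))) / (real n * ln 2))"
        by (simp only: ereal_less_eq)
    qed
  qed
  also have "\<dots> \<le> limsup (\<lambda>n. ereal (ln (real (sep_number n (graph_on cantor_set (FF UNIV)))) / (real n * ln 2)))"
    by (rule Liminf_le_Limsup) simp
  finally show "ereal (17/10 * th) \<le> limsup (\<lambda>n. ereal (ln (real (sep_number n (graph_on cantor_set (FF UNIV)))) / (real n * ln 2)))" .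
qed

lemma ereal_cmp: "ereal (8/5 * th) < ereal (17/10 * th)"
proof -
  have "0 < th" using th_ge by linarith
  hence "8/5 * th < 17/10 * th" by linarith
  thus ?thesis by (simp only: less_ereal.simps(1))
qed

lemma graph_cong: "(\<And>x. x \<in> K \<Longrightarrow> h1 x = h2 x) \<Longrightarrow> graph_on K h1 = graph_on K h2"
  unfolding graph_on_def by force

theorem theorem1p9:
  shows "\<exists>f g :: real \<Rightarrow> real. continuous_on cantor_set f \<and> continuous_on cantor_set g \<and>
    upper_box_dim (graph_on cantor_set (\<lambda>x. f x + g x)) >
      max (upper_box_dim (graph_on cantor_set f)) (upper_box_dim (graph_on cantor_set g))"
proof (intro exI conjI)
  have G: "graph_on cantor_set (\<lambda>x. FF {m. even m} x + FF {m. odd m} x) = graph_on cantor_set (FF UNIV)"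
    by (rule graph_cong) (rule FF_sum)
  have th_pos: "0 < th" using th_ge by linarith
  have u1: "upper_box_dim (graph_on cantor_set (FF {m. even m})) < ereal (17/10 * th)"
  proof -
    have "upper_box_dim (graph_on cantor_set (FF {m. even m})) \<le> ereal (8/5 * th)"
      by (rule dim_upper) (rule par_even)
    thus ?thesis using ereal_cmp by (rule le_less_trans)
  qed
  have u2: "upper_box_dim (graph_on cantor_set (FF {m. odd m})) < ereal (17/10 * th)"
  proof -
    have "upper_box_dim (graph_on cantor_set (FF {m. odd m})) \<le> ereal (8/5 * th)"
      by (rule dim_upper) (rule par_odd)
    thus ?thesis using ereal_cmp by (rule le_less_trans)
  qed
  show "max (upper_box_dim (graph_on cantor_set (FF {m. even m}))) (upper_box_dim (graph_on cantor_set (FF {m. odd m})))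
      < upper_box_dim (graph_on cantor_set (\<lambda>x. FF {m. even m} x + FF {m. odd m} x))"
    unfolding G max_less_iff_conj using order_less_le_trans[OF u1 dim_lower] order_less_le_trans[OF u2 dim_lower]
    by (rule conjI)
  show "continuous_on cantor_set (FF {m. even m})" by (rule FF_cont)
  show "continuous_on cantor_set (FF {m. odd m})" by (rule FF_cont)
qed

end
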